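(* Let $X$ be a complex Banach space and let $T\in\mathcal{B}(X)$ be a power-bounded operator such that $\sigma(T)\cap\mathbb{T}=\{1\}$. Then either $$\limsup_{n\to\infty} n\|T^n(I-T)\|>0,$$ or there exist closed $T$-invariant subspaces $X_0$ and $X_1$ of $X$ such that $X_0\subset\mathrm{Fix}(T)$, the restriction $T_1$ of $T$ to $X_1$ satisfies $r(T_1)<1$, and $X=X_0\oplus X_1$.
   Context: $\mathcal{B}(X)$ denotes the bounded linear operators on $X$; $T$ is power-bounded if $\sup_{n\geq0}\|T^n\|<\infty$. $\mathbb{T}=\{\lambda\in\mathbb{C}:|\lambda|=1\}$, $\sigma(T)$ is the spectrum, $r(\cdot)$ the spectral radius, and $\mathrm{Fix}(T)=\mathrm{Ker}(I-T)$. *)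

theory Defs
  imports "HOL-Analysis.Analysis"
begin

class complex_vector = real_vector +
  fixes scaleC :: "complex \<Rightarrow> 'a \<Rightarrow> 'a" (infixr \<open>*\<^sub>C\<close> 75)
  assumes scaleC_add_right: "a *\<^sub>C (x + y) = a *\<^sub>C x + a *\<^sub>C y"
    and scaleC_add_left: "(a + b) *\<^sub>C x = a *\<^sub>C x + b *\<^sub>C x"
    and scaleC_scaleC: "a *\<^sub>C (b *\<^sub>C x) = (a * b) *\<^sub>C x"
    and scaleC_one: "1 *\<^sub>C x = x"
    and scaleR_scaleC: "scaleR r x = complex_of_real r *\<^sub>C x"

class complex_normed_vector = complex_vector + real_normed_vector +
  assumes norm_scaleC: "norm (a *\<^sub>C x) = cmod a * norm x"

definition bounded_clinear :: "('a::complex_normed_vector \<Rightarrow> 'b::complex_normed_vector) \<Rightarrow> bool" where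
  "bounded_clinear T \<longleftrightarrow> bounded_linear T \<and> (\<forall>c x. T (c *\<^sub>C x) = c *\<^sub>C T x)"

definition power_bounded :: "('a::complex_normed_vector \<Rightarrow> 'a) \<Rightarrow> bool" where
  "power_bounded T \<longleftrightarrow> (\<exists>M. \<forall>n. onorm (T ^^ n) \<le> M)"

definition csubspace :: "'a::complex_vector set \<Rightarrow> bool" where
  "csubspace Y \<longleftrightarrow> 0 \<in> Y \<and> (\<forall>x\<in>Y. \<forall>y\<in>Y. x + y \<in> Y) \<and> (\<forall>c. \<forall>x\<in>Y. c *\<^sub>C x \<in> Y)"

definition Fix :: "('a \<Rightarrow> 'a) \<Rightarrow> 'a set" where
  "Fix T = {x. T x = x}"

text \<open>Spectrum of the restriction of T to an invariant subspace Y: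
  \<lambda> is in the resolvent set iff \<lambda>I - T restricted to Y is a bijection of Y
  with a bounded inverse.\<close>
definition spectrum_on :: "'a::complex_normed_vector set \<Rightarrow> ('a \<Rightarrow> 'a) \<Rightarrow> complex set" where
  "spectrum_on Y T = {l. \<not> (\<exists>S. (\<forall>y\<in>Y. S y \<in> Y \<and> S (l *\<^sub>C y - T y) = y \<and> l *\<^sub>C S y - T (S y) = y)
        \<and> (\<exists>K. \<forall>y\<in>Y. norm (S y) \<le> K * norm y))}"

abbreviation spectrum :: "('a::complex_normed_vector \<Rightarrow> 'a) \<Rightarrow> complex set" where
  "spectrum T \<equiv> spectrum_on UNIV T"

text \<open>Spectral radius of the restriction; by convention 0 when the spectrum is empty
  (only possible for the zero space).\<close>
definition spectral_radius_on :: "'a::complex_normed_vector set \<Rightarrow> ('a \<Rightarrow> 'a) \<Rightarrow> real" where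
  "spectral_radius_on Y T = (if spectrum_on Y T = {} then 0 else Sup (cmod ` spectrum_on Y T))"

end

theory Submission imports Defs begin

locale pbop =
  fixes T :: "'a::{complex_normed_vector, banach} \<Rightarrow> 'a"
  assumes bcl: "bounded_clinear T"
begin

lemma blT: "bounded_linear T" using bcl unfolding bounded_clinear_def by simp
lemma cT: "T (c *\<^sub>C x) = c *\<^sub>C T x" using bcl unfolding bounded_clinear_def by simp

lemma bl_pow: "bounded_linear (T^^n)"
proof (induction n)
  case 0 then show ?case by (simp add: id_def bounded_linear_ident)
next
  case (Suc n)
  have "bounded_linear (\<lambda>x. T ((T^^n) x))" by (rule bounded_linear_compose[OF blT Suc])
  then show ?case by (simp add: o_def)
qed

lemma c_pow: "(T^^n) (c *\<^sub>C x) = c *\<^sub>C (T^^n) x"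
  by (induction n) (simp_all add: cT)

lemma pow_diff: "(T^^n) (x - y) = (T^^n) x - (T^^n) y"
  using linear_diff[OF bounded_linear.linear[OF bl_pow]] by blast

lemma pow_T: "(T^^n) (T x) = (T^^Suc n) x"
  by (simp add: funpow_swap1)

definition a :: "nat \<Rightarrow> real" where "a n = onorm ((T ^^ n) \<circ> (\<lambda>x. x - T x))"

lemma blA: "bounded_linear (\<lambda>x. x - T x)"
  by (rule bounded_linear_sub[OF bounded_linear_ident blT])

lemma bl_powA: "bounded_linear ((T^^n) \<circ> (\<lambda>x. x - T x))"
  using bounded_linear_compose[OF bl_pow blA] by (simp add: o_def)

lemma a_nonneg: "0 \<le> a n" unfolding a_def by (rule onorm_pos_le[OF bl_powA])

lemma a_bound: "norm ((T^^n) (x - T x)) \<le> a n * norm x"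
  using onorm[OF bl_powA, of n x] unfolding a_def by simp

lemma L: "norm ((T^^(h+k)) ((x - T x) - T (x - T x))) \<le> a h * a k * norm x"
proof -
  define y where "y = (T^^k) (x - T x)"
  have "(T^^(h+k)) ((x - T x) - T (x - T x)) = (T^^h) ((T^^k) ((x - T x) - T (x - T x)))"
    by (simp add: funpow_add)
  also have "(T^^k) ((x - T x) - T (x - T x)) = y - T y"
    unfolding y_def pow_diff[of k "x - T x"] pow_T by simp
  finally have "norm ((T^^(h+k)) ((x - T x) - T (x - T x))) = norm ((T^^h) (y - T y))" by simp
  also have "\<dots> \<le> a h * norm y" by (rule a_bound)
  also have "\<dots> \<le> a h * (a k * norm x)"
    by (rule mult_left_mono[OF _ a_nonneg]) (simp add: y_def a_bound)
  finally show ?thesis by (simp add: mult.assoc)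
qed

lemma tele: "m \<le> N \<Longrightarrow> (T^^m) z - (T^^N) z = (\<Sum>j=m..<N. (T^^j) (z - T z))"
proof (induction N rule: dec_induct)
  case base then show ?case by simp
next
  case (step n)
  have "(T^^m) z - (T^^Suc n) z = ((T^^m) z - (T^^n) z) + ((T^^n) z - (T^^Suc n) z)" by simp
  also have "(T^^n) z - (T^^Suc n) z = (T^^n) (z - T z)" by (simp add: pow_diff pow_T)
  finally show ?case using step by simp
qed

lemma tel_real: "m \<le> N \<Longrightarrow> 2 \<le> m \<Longrightarrow>
   (\<Sum>j=m..<N. 1/(real j * (real j - 1))) = 1/(real m - 1) - 1/(real N - 1)"
proof (induction N rule: dec_induct)
  case base then show ?case by simp
next
  case (step n)
  have "real n \<ge> 2" using step by simp
  then have ne: "real n - 1 \<noteq> 0" "real n \<noteq> 0" by auto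
  have "1/(real n - 1) = real n/(real n * (real n - 1))" using ne by simp
  then have "1/(real n - 1) - 1/(real n * (real n - 1)) = (real n - 1)/(real n * (real n - 1))"
    by (simp add: diff_divide_distrib)
  also have "\<dots> = 1/real n" using ne by simp
  finally have "1/(real n - 1) - 1/(real n * (real n - 1)) = 1/real n" .
  then have "1/(real m - 1) - 1/(real n - 1) + 1/(real n * (real n - 1)) = 1/(real m - 1) - 1/(real (Suc n) - 1)"
    by simp
  then show ?case using step by simp
qed

lemma hk_bound:
  assumes "1 \<le> n" "0 \<le> \<delta>" "\<forall>m\<ge>n. real m * a m \<le> \<delta>" "2*n \<le> j"
  shows "a (j div 2) * a (j - j div 2) \<le> 4*\<delta>^2/(real j * (real j - 1))"
proof -
  define h where "h = j div 2"
  define k where "k = j - h"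
  have hn: "h \<ge> n" "k \<ge> n" using assms(4) unfolding h_def k_def by auto
  have hk: "k = h \<or> k = h + 1" unfolding k_def h_def by auto
  have jhk: "real j = real h + real k" unfolding k_def h_def by simp
  have hpos: "real h > 0" "real k > 0" using hn assms(1) by auto
  have ah: "a h \<le> \<delta>/real h" using assms(3) hn hpos by (simp add: pos_le_divide_eq mult.commute)
  have ak: "a k \<le> \<delta>/real k" using assms(3) hn hpos by (simp add: pos_le_divide_eq mult.commute)
  have "a h * a k \<le> (\<delta>/real h) * (\<delta>/real k)"
    by (rule mult_mono[OF ah ak]) (use assms(2) hpos in \<open>auto simp: a_nonneg\<close>)
  also have "\<dots> = 4*\<delta>^2 / (4 * real h * real k)" by (simp add: power2_eq_square)
  also have "\<dots> \<le> 4*\<delta>^2/(real j * (real j - 1))"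
  proof (rule divide_left_mono)
    show "real j * (real j - 1) \<le> 4 * real h * real k"
      using hk jhk hpos by (auto simp: algebra_simps)
    show "0 < 4 * real h * real k * (real j * (real j - 1))"
      using hpos jhk by (simp add: mult_pos_pos)
  qed (simp)
  finally show ?thesis unfolding h_def k_def .
qed


lemma Bstep:
  assumes "1 \<le> n" "0 \<le> \<delta>" "\<forall>m\<ge>n. real m * a m \<le> \<delta>"
  shows "\<forall>m\<ge>2*n. real m * a m \<le> 8*\<delta>^2"
proof (intro allI impI)
  fix m assume m: "2*n \<le> m"
  have m2: "real m \<ge> 2" using m assms(1) by simp
  have key: "norm ((T^^m) (x - T x)) \<le> (4*\<delta>^2/(real m - 1)) * norm x" for x
  proof (rule field_le_epsilon)
    fix e :: real assume e: "0 < e"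
    obtain n' :: nat where n': "\<delta> * norm x / e < real n'" using reals_Archimedean2 by blast
    define N where "N = max m n'"
    have Nm: "m \<le> N" by (simp add: N_def)
    have Npos: "real N > 0" using Nm m2 by simp
    have "real n' \<le> real N" by (simp add: N_def)
    then have "\<delta> * norm x / e < real N" using n' by linarith
    hence "\<delta> * norm x < e * real N" using e by (simp add: divide_less_eq mult.commute)
    hence t1: "\<delta>/real N * norm x < e" using e Npos by (simp add: divide_less_eq mult.commute)
    have aN: "a N \<le> \<delta> / real N" using assms(3) Nm m assms(1) Npos
      by (simp add: pos_le_divide_eq mult.commute)
    define z where "z = x - T x"
    have eq: "(T^^m) z = (T^^N) z + (\<Sum>j=m..<N. (T^^j) (z - T z))"
      using tele[OF Nm, of z] by (simp add: algebra_simps)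
    have n1: "norm ((T^^m) z) \<le> norm ((T^^N) z) + (\<Sum>j=m..<N. norm ((T^^j) (z - T z)))"
      unfolding eq by (rule order_trans[OF norm_triangle_ineq add_left_mono[OF norm_sum]])
    have n2: "norm ((T^^N) z) \<le> \<delta>/real N * norm x"
      using a_bound[of N x] mult_right_mono[OF aN norm_ge_zero, of x] unfolding z_def by linarith
    have n3: "(\<Sum>j=m..<N. norm ((T^^j) (z - T z))) \<le> (\<Sum>j=m..<N. 4*\<delta>^2 * norm x * (1/(real j * (real j - 1))))"
    proof (rule sum_mono)
      fix j assume "j \<in> {m..<N}"
      hence j: "2*n \<le> j" using m by simp
      have "j = j div 2 + (j - j div 2)" by simp
      then have "norm ((T^^j) (z - T z)) = norm ((T^^(j div 2 + (j - j div 2))) (z - T z))" by metis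
      also have "\<dots> \<le> a (j div 2) * a (j - j div 2) * norm x" unfolding z_def by (rule L)
      also have "\<dots> \<le> 4*\<delta>^2/(real j * (real j - 1)) * norm x"
        by (rule mult_right_mono[OF hk_bound[OF assms j] norm_ge_zero])
      finally show "norm ((T^^j) (z - T z)) \<le> 4*\<delta>^2 * norm x * (1/(real j * (real j - 1)))" by simp
    qed
    have "(\<Sum>j=m..<N. 4*\<delta>^2 * norm x * (1/(real j * (real j - 1))))
        = 4*\<delta>^2 * norm x * (\<Sum>j=m..<N. 1/(real j * (real j - 1)))"
      by (rule sum_distrib_left[symmetric])
    also have "\<dots> = 4*\<delta>^2 * norm x * (1/(real m - 1) - 1/(real N - 1))"
      using tel_real[OF Nm] m assms(1) by simp
    also have "\<dots> \<le> 4*\<delta>^2 * norm x * (1/(real m - 1))"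
      using Nm m2 by (intro mult_left_mono) auto
    finally have n4: "(\<Sum>j=m..<N. 4*\<delta>^2 * norm x * (1/(real j * (real j - 1)))) \<le> 4*\<delta>^2/(real m - 1) * norm x"
      by simp
    show "norm ((T^^m) (x - T x)) \<le> (4*\<delta>^2/(real m - 1)) * norm x + e"
      using n1 n2 n3 n4 t1 unfolding z_def by linarith
  qed
  have am: "a m \<le> 4*\<delta>^2/(real m - 1)" unfolding a_def
    by (rule onorm_bound) (use key m2 in auto)
  have "real m * a m \<le> real m * (4*\<delta>^2/(real m - 1))"
    using am m2 by (intro mult_left_mono) auto
  also have "\<dots> = 4*\<delta>^2 * (real m / (real m - 1))" by simp
  also have "\<dots> \<le> 4*\<delta>^2 * 2"
    using m2 by (intro mult_left_mono) (auto simp: divide_le_eq)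
  finally show "real m * a m \<le> 8*\<delta>^2" by simp
qed


lemma iter:
  assumes "1 \<le> n0" "\<forall>m\<ge>n0. real m * a m \<le> 1/16"
  shows "\<forall>m \<ge> 2^k * n0. real m * a m \<le> (1/8) * (1/2)^(2^k)"
proof (induction k)
  case 0 then show ?case using assms(2) by simp
next
  case (Suc k)
  have H: "\<forall>m\<ge>2*(2^k*n0). real m * a m \<le> 8*((1/8) * (1/2::real)^(2^k))^2"
    by (rule Bstep[OF _ _ Suc]) (use assms(1) in auto)
  have E: "8*((1/8) * (1/2::real)^(2^k))^2 = (1/8) * (1/2)^(2^Suc k)"
    by (simp add: power_mult_distrib power2_eq_square mult_2 power_add)
  show ?case
  proof (intro allI impI)
    fix m assume "2^Suc k * n0 \<le> m"
    then have "2*(2^k*n0) \<le> m" by simp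
    then show "real m * a m \<le> (1/8) * (1/2)^(2^Suc k)" using H E by metis
  qed
qed

lemma dyadic:
  fixes m n0 :: nat
  assumes "n0 \<le> m" "1 \<le> n0"
  shows "\<exists>k. 2^k*n0 \<le> m \<and> m < 2^Suc k * n0"
  using assms
proof (induction m rule: dec_induct)
  case base
  then show ?case by (intro exI[of _ 0]) simp
next
  case (step n)
  then obtain k where k: "2^k*n0 \<le> n" "n < 2^Suc k * n0" by blast
  show ?case
  proof (cases "Suc n < 2^Suc k * n0")
    case True then show ?thesis using k by (intro exI[of _ k]) simp
  next
    case False
    then have "Suc n = 2^Suc k * n0" using k by simp
    then show ?thesis using assms(2) by (intro exI[of _ "Suc k"]) simp
  qed
qed

lemma expdecay:
  assumes "1 \<le> n0" "\<forall>m\<ge>n0. real m * a m \<le> 1/16"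
  shows "\<forall>m\<ge>n0. a m \<le> root (2*n0) (1/2) ^ m"
proof (intro allI impI)
  fix m assume m: "n0 \<le> m"
  define \<rho> where "\<rho> = root (2*n0) (1/2)"
  have rho: "0 \<le> \<rho>" "\<rho> \<le> 1" "\<rho>^(2*n0) = 1/2" using assms(1) unfolding \<rho>_def by auto
  obtain k where k: "2^k*n0 \<le> m" "m < 2^Suc k * n0" using dyadic[OF m assms(1)] by blast
  have "a m \<le> real m * a m" using m assms(1) a_nonneg[of m]
    by (simp add: mult_le_cancel_right1)
  also have "\<dots> \<le> (1/8) * (1/2)^(2^k)" using iter[OF assms, of k] k by simp
  also have "\<dots> \<le> (1/2)^(2^k)" by simp
  also have "(1/2::real)^(2^k) = \<rho>^(2*n0*2^k)"
    using power_mult[of \<rho> "2*n0" "2^k"] rho(3) by simp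
  also have "\<dots> \<le> \<rho>^m"
  proof (rule power_decreasing)
    show "m \<le> 2*n0*2^k" using k(2) by (simp add: mult.commute mult.left_commute)
  qed (use rho in auto)
  finally show "a m \<le> root (2*n0) (1/2) ^ m" unfolding \<rho>_def .
qed

end

lemma bl_scaleC: "bounded_linear (\<lambda>x::'a::complex_normed_vector. c *\<^sub>C x)"
proof (rule bounded_linear_intro[where K="cmod c"])
  show "c *\<^sub>C (x + y) = c *\<^sub>C x + c *\<^sub>C y" for x y :: 'a by (rule scaleC_add_right)
  show "c *\<^sub>C (r *\<^sub>R x) = r *\<^sub>R (c *\<^sub>C x)" for r and x :: 'a
    by (simp add: scaleR_scaleC scaleC_scaleC mult.commute)
  show "norm (c *\<^sub>C x) \<le> norm x * cmod c" for x :: 'a by (simp add: norm_scaleC mult.commute)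
qed

lemma scaleC_diff: "c *\<^sub>C (x - y) = c *\<^sub>C x - c *\<^sub>C (y::'a::complex_normed_vector)"
  using linear_diff[OF bounded_linear.linear[OF bl_scaleC]] by blast

lemma scaleC_zero_left: "(0::complex) *\<^sub>C (x::'a::complex_normed_vector) = 0"
  using scaleR_scaleC[of 0 x] by simp

lemma scaleC_zero_right: "c *\<^sub>C (0::'a::complex_normed_vector) = 0"
  using linear_0[OF bounded_linear.linear[OF bl_scaleC]] by blast

lemma suminf_scaleC: "summable f \<Longrightarrow> c *\<^sub>C suminf f = (\<Sum>n. c *\<^sub>C (f n::'a::{complex_normed_vector,banach}))"
  using bounded_linear.suminf[OF bl_scaleC] by blast

lemma norm_suminf_bound:
  fixes f :: "nat \<Rightarrow> 'b::banach"
  assumes "\<And>n. norm (f n) \<le> g n" "summable g"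
  shows "summable f" "norm (suminf f) \<le> suminf g"
proof -
  have s: "summable (\<lambda>n. norm (f n))"
    by (rule summable_comparison_test'[OF assms(2)]) (use assms(1) in auto)
  then show "summable f" by (rule summable_norm_cancel)
  have "norm (suminf f) \<le> (\<Sum>n. norm (f n))" by (rule summable_norm[OF s])
  also have "\<dots> \<le> suminf g" by (rule suminf_le[OF assms(1) s assms(2)])
  finally show "norm (suminf f) \<le> suminf g" .
qed

locale pbop2 = pbop +
  fixes D q :: real
  assumes q: "0 < q" "q < 1" and Dq: "\<And>j. a j \<le> D * q^j"
begin

lemma D_nonneg: "0 \<le> D" using Dq[of 0] a_nonneg[of 0] by simp

definition R where "R x = (\<Sum>j. (T^^j) (x - T x))"

lemma tnorm: "norm ((T^^j) (x - T x)) \<le> D * norm x * q^j"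
  using order_trans[OF a_bound mult_right_mono[OF Dq norm_ge_zero]] by (simp add: mult_ac)

lemma geo: "summable (\<lambda>j. C * q^j)" "(\<Sum>j. C * q^j) = C / (1 - q)"
  using q summable_geometric[of q] suminf_geometric[of q] by (auto intro: summable_mult simp: suminf_mult)

lemma sumR: "summable (\<lambda>j. (T^^j) (x - T x))"
  using norm_suminf_bound(1)[OF tnorm geo(1)] .

lemma R_bound: "norm (R x) \<le> D / (1 - q) * norm x"
  using norm_suminf_bound(2)[OF tnorm geo(1)] geo(2) unfolding R_def by simp

lemma lin_pow: "linear (T^^n)" by (rule bounded_linear.linear[OF bl_pow])
lemma linT: "linear T" by (rule bounded_linear.linear[OF blT])

lemma term_add: "(T^^j) ((x + y) - T (x + y)) = (T^^j) (x - T x) + (T^^j) (y - T y)"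
  by (simp add: linear_add[OF linT] linear_add[OF lin_pow, symmetric] algebra_simps)

lemma term_scaleC: "(T^^j) (c *\<^sub>C x - T (c *\<^sub>C x)) = c *\<^sub>C (T^^j) (x - T x)"
  by (simp add: cT c_pow scaleC_diff[symmetric])

lemma R_add: "R (x + y) = R x + R y"
  unfolding R_def term_add by (rule suminf_add[OF sumR sumR, symmetric])

lemma R_scaleC: "R (c *\<^sub>C x) = c *\<^sub>C R x"
  unfolding R_def term_scaleC by (rule suminf_scaleC[OF sumR, symmetric])

lemma bl_R: "bounded_linear R"
proof (rule bounded_linear_intro[where K="D/(1-q)"])
  show "R (x + y) = R x + R y" for x y by (rule R_add)
  show "R (r *\<^sub>R x) = r *\<^sub>R R x" for r x by (simp add: scaleR_scaleC R_scaleC)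
  show "norm (R x) \<le> norm x * (D / (1 - q))" for x using R_bound[of x] by (simp add: mult.commute)
qed

lemma TR: "T (R x) = R x - (x - T x)"
proof -
  have "T (R x) = (\<Sum>j. T ((T^^j) (x - T x)))"
    unfolding R_def by (rule bounded_linear.suminf[OF blT sumR])
  also have "\<dots> = (\<Sum>j. (T^^Suc j) (x - T x))" by simp
  also have "\<dots> = R x - (x - T x)" unfolding R_def using suminf_split_head[OF sumR, of x] by simp
  finally show ?thesis .
qed

lemma RT: "R (T x) = T (R x)"
proof -
  have "\<And>j. (T^^j) (T x - T (T x)) = T ((T^^j) (x - T x))"
    by (simp add: linear_diff[OF linT, symmetric] funpow_swap1)
  then have "R (T x) = (\<Sum>j. T ((T^^j) (x - T x)))" unfolding R_def by simp
  also have "\<dots> = T (R x)"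
    unfolding R_def by (rule bounded_linear.suminf[OF blT sumR, symmetric])
  finally show ?thesis .
qed

lemma R_fix: "T x = x \<Longrightarrow> R x = 0"
  unfolding R_def by (simp add: linear_0[OF lin_pow])

lemma pow_minus_P: "(T^^k) x - (x - R x) = (\<Sum>j. (T^^(j+k)) (x - T x))"
proof -
  have "R x = (\<Sum>j. (T^^(j+k)) (x - T x)) + (\<Sum>i<k. (T^^i) (x - T x))"
    unfolding R_def by (rule suminf_split_initial_segment[OF sumR])
  moreover have "x - (T^^k) x = (\<Sum>i<k. (T^^i) (x - T x))"
    using tele[of 0 k x] by (simp add: atLeast0LessThan)
  ultimately show ?thesis by (simp add: algebra_simps)
qed

lemma pow_minus_P_bound: "norm ((T^^k) x - (x - R x)) \<le> D / (1 - q) * q^k * norm x"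
proof -
  have b: "norm ((T^^(j+k)) (x - T x)) \<le> (D * norm x * q^k) * q^j" for j
    using tnorm[of "j+k" x] by (simp add: power_add mult_ac)
  have "norm (\<Sum>j. (T^^(j+k)) (x - T x)) \<le> (\<Sum>j. (D * norm x * q^k) * q^j)"
    by (rule norm_suminf_bound(2)[OF b geo(1)])
  also have "\<dots> = (D * norm x * q^k) / (1 - q)" by (rule geo(2))
  also have "\<dots> = D / (1 - q) * q^k * norm x" by simp
  finally show ?thesis unfolding pow_minus_P .
qed


definition X1 where "X1 = {x. R x = x}"

lemma X1_T: "x \<in> X1 \<Longrightarrow> T x \<in> X1" by (simp add: X1_def RT)

lemma X1_pow: "x \<in> X1 \<Longrightarrow> (T^^k) x \<in> X1"
  by (induction k) (simp_all add: X1_T)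

lemma X1_norm: "x \<in> X1 \<Longrightarrow> norm ((T^^k) x) \<le> D/(1-q) * q^k * norm x"
  using pow_minus_P_bound[of k x] by (simp add: X1_def)

lemma spec_X1: "spectrum_on X1 T \<subseteq> {l. cmod l \<le> q}"
proof
  fix l assume l: "l \<in> spectrum_on X1 T"
  show "l \<in> {l. cmod l \<le> q}"
  proof (rule ccontr)
    assume "l \<notin> {l. cmod l \<le> q}"
    then have lq: "q < cmod l" by simp
    then have l0: "l \<noteq> 0" using q by auto
    define w where "w = 1/l"
    have lw: "l * w = 1" using l0 by (simp add: w_def)
    define E where "E = D/(1-q)"
    have E0: "0 \<le> E" using D_nonneg q by (simp add: E_def)
    define r where "r = cmod w * q"
    have r: "0 \<le> r" "r < 1" using lq q l0 by (auto simp: r_def w_def norm_divide divide_less_eq)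
    define u where "u y k = w^k *\<^sub>C (T^^k) y" for y k
    have ub: "norm (u y k) \<le> (E * norm y) * r^k" if y: "y \<in> X1" for y k
    proof -
      have "norm (u y k) = cmod w ^ k * norm ((T^^k) y)" by (simp add: u_def norm_scaleC norm_power)
      also have "\<dots> \<le> cmod w ^ k * (E * q^k * norm y)"
        using X1_norm[OF y, of k] by (intro mult_left_mono) (auto simp: E_def)
      also have "\<dots> = (E * norm y) * r^k" by (simp add: r_def power_mult_distrib mult_ac)
      finally show ?thesis .
    qed
    have gs: "summable (\<lambda>k. C * r^k)" for C using r by (intro summable_mult summable_geometric) simp
    have gsum: "(\<Sum>k. C * r^k) = C / (1 - r)" for C
      using r by (simp add: suminf_mult suminf_geometric)
    have us: "summable (u y)" if "y \<in> X1" for y using norm_suminf_bound(1)[OF ub[OF that] gs] .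
    have uS: "summable (\<lambda>k. u y (Suc k))" if "y \<in> X1" for y
      using us[OF that] by (simp add: summable_Suc_iff)
    have u0: "u y 0 = y" for y by (simp add: u_def scaleC_one)
    have head: "(\<Sum>k. u y (Suc k)) = (\<Sum>k. u y k) - y" if "y \<in> X1" for y
      using suminf_split_head[OF us[OF that]] u0 by simp
    define S where "S y = w *\<^sub>C (\<Sum>k. u y k)" for y
    have blwT: "bounded_linear (\<lambda>z. w *\<^sub>C T z)" by (rule bounded_linear_compose[OF bl_scaleC blT])
    have props: "S y \<in> X1 \<and> S (l *\<^sub>C y - T y) = y \<and> l *\<^sub>C S y - T (S y) = y \<and> norm (S y) \<le> (cmod w * E / (1 - r)) * norm y"
      if y: "y \<in> X1" for y
    proof (intro conjI)
      have "R (\<Sum>k. u y k) = (\<Sum>k. R (u y k))" by (rule bounded_linear.suminf[OF bl_R us[OF y]])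
      also have "\<dots> = (\<Sum>k. u y k)"
        using X1_pow[OF y] by (simp add: u_def R_scaleC X1_def)
      finally show "S y \<in> X1" by (simp add: X1_def S_def R_scaleC)
    next
      have "w *\<^sub>C T (\<Sum>k. u y k) = (\<Sum>k. w *\<^sub>C T (u y k))"
        by (rule bounded_linear.suminf[OF blwT us[OF y]])
      also have "\<dots> = (\<Sum>k. u y (Suc k))"
        by (simp add: u_def cT c_pow scaleC_scaleC mult.commute)
      also have "\<dots> = (\<Sum>k. u y k) - y" by (rule head[OF y])
      finally have TS: "T (S y) = (\<Sum>k. u y k) - y" by (simp add: S_def cT)
      have "l *\<^sub>C S y = (\<Sum>k. u y k)" by (simp add: S_def scaleC_scaleC lw scaleC_one)
      then show "l *\<^sub>C S y - T (S y) = y" using TS by simp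
    next
      have e: "u (l *\<^sub>C y - T y) k = l *\<^sub>C u y k - l *\<^sub>C u y (Suc k)" for k
      proof -
        have "u (l *\<^sub>C y - T y) k = w^k *\<^sub>C (l *\<^sub>C (T^^k) y - (T^^Suc k) y)"
          by (simp add: u_def pow_diff c_pow pow_T)
        also have "\<dots> = (w^k * l) *\<^sub>C (T^^k) y - w^k *\<^sub>C (T^^Suc k) y"
          by (simp add: scaleC_diff scaleC_scaleC)
        also have "\<dots> = l *\<^sub>C u y k - l *\<^sub>C u y (Suc k)"
          unfolding u_def scaleC_scaleC
          by (metis (no_types, lifting) lw mult.commute mult.left_commute mult_1 power_Suc)
        finally show ?thesis .
      qed
      have "(\<Sum>k. u (l *\<^sub>C y - T y) k) = (\<Sum>k. l *\<^sub>C u y k - l *\<^sub>C u y (Suc k))" by (simp add: e)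
      also have "\<dots> = (\<Sum>k. l *\<^sub>C u y k) - (\<Sum>k. l *\<^sub>C u y (Suc k))"
        by (rule suminf_diff[symmetric])
           (use us[OF y] uS[OF y] in \<open>auto intro: bounded_linear.summable[OF bl_scaleC]\<close>)
      also have "\<dots> = l *\<^sub>C (\<Sum>k. u y k) - l *\<^sub>C (\<Sum>k. u y (Suc k))"
        using suminf_scaleC[OF us[OF y]] suminf_scaleC[OF uS[OF y]] by simp
      also have "\<dots> = l *\<^sub>C y" by (simp add: head[OF y] scaleC_diff)
      finally show "S (l *\<^sub>C y - T y) = y" by (simp add: S_def scaleC_scaleC mult.commute lw scaleC_one)
    next
      have "norm (\<Sum>k. u y k) \<le> (\<Sum>k. (E * norm y) * r^k)"
        by (rule norm_suminf_bound(2)[OF ub[OF y] gs])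
      also have "\<dots> = E * norm y / (1 - r)" by (rule gsum)
      finally have "norm (S y) \<le> cmod w * (E * norm y / (1 - r))"
        unfolding S_def norm_scaleC by (intro mult_left_mono) auto
      then show "norm (S y) \<le> (cmod w * E / (1 - r)) * norm y" by simp
    qed
    have "\<exists>S. (\<forall>y\<in>X1. S y \<in> X1 \<and> S (l *\<^sub>C y - T y) = y \<and> l *\<^sub>C S y - T (S y) = y)
        \<and> (\<exists>K. \<forall>y\<in>X1. norm (S y) \<le> K * norm y)"
      using props by blast
    then show False using l unfolding spectrum_on_def by blast
  qed
qed

lemma radius_X1: "spectral_radius_on X1 T < 1"
proof (cases "spectrum_on X1 T = {}")
  case True then show ?thesis by (simp add: spectral_radius_on_def)
next
  case False
  have "Sup (cmod ` spectrum_on X1 T) \<le> q"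
    using False spec_X1 by (intro cSup_least) auto
  then show ?thesis using False q by (simp add: spectral_radius_on_def)
qed

end

theorem theorem2p1:
  fixes T :: "'a::{complex_normed_vector, banach} \<Rightarrow> 'a"
  assumes "bounded_clinear T"
    and "power_bounded T"
    and "spectrum T \<inter> sphere 0 1 = {1}"
  shows "limsup (\<lambda>n. ereal (real n * onorm ((T ^^ n) \<circ> (\<lambda>x. x - T x)))) > 0
     \<or> (\<exists>X0 X1. closed X0 \<and> csubspace X0 \<and> T ` X0 \<subseteq> X0
          \<and> closed X1 \<and> csubspace X1 \<and> T ` X1 \<subseteq> X1
          \<and> X0 \<subseteq> Fix T
          \<and> spectral_radius_on X1 T < 1
          \<and> X0 \<inter> X1 = {0} \<and> (\<forall>x. \<exists>x0\<in>X0. \<exists>x1\<in>X1. x = x0 + x1))"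
proof (cases "limsup (\<lambda>n. ereal (real n * onorm ((T ^^ n) \<circ> (\<lambda>x. x - T x)))) > 0")
  case True then show ?thesis by blast
next
  case False
  interpret P: pbop T by unfold_locales (rule assms(1))
  let ?f = "\<lambda>n. ereal (real n * P.a n)"
  have ls: "limsup ?f \<le> 0" using False unfolding P.a_def by simp
  have li: "0 \<le> liminf ?f"
    by (rule Liminf_bounded) (simp add: P.a_nonneg)
  have "liminf ?f \<le> limsup ?f" by (rule Liminf_le_Limsup) simp
  then have "liminf ?f = 0" "limsup ?f = 0" using ls li by auto
  then have "(?f \<longlongrightarrow> 0) sequentially" by (intro Liminf_eq_Limsup) auto
  then have lim: "(\<lambda>n. real n * P.a n) \<longlonglongrightarrow> 0" using lim_ereal[of _ 0] by (simp add: zero_ereal_def)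
  have "eventually (\<lambda>n. real n * P.a n < 1/16) sequentially"
    by (rule order_tendstoD(2)[OF lim]) simp
  then obtain n1 where n1: "\<forall>m\<ge>n1. real m * P.a m < 1/16" by (auto simp: eventually_sequentially)
  define n0 where "n0 = max 1 n1"
  have n0: "1 \<le> n0" "\<forall>m\<ge>n0. real m * P.a m \<le> 1/16" using n1 by (auto simp: n0_def less_imp_le)
  define \<rho> where "\<rho> = root (2*n0) (1/2)"
  have rho: "0 < \<rho>" "\<rho> < 1" using n0(1) by (auto simp: \<rho>_def)
  have dec: "\<forall>m\<ge>n0. P.a m \<le> \<rho>^m" using P.expdecay[OF n0] unfolding \<rho>_def .
  obtain M where M: "\<And>n. onorm (T^^n) \<le> M" using assms(2) unfolding power_bounded_def by blast
  define oA where "oA = onorm (\<lambda>x. x - T x)"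
  have oA: "0 \<le> oA" unfolding oA_def by (rule onorm_pos_le[OF P.blA])
  have aM: "P.a j \<le> M * oA" for j
  proof -
    have "P.a j \<le> onorm (T^^j) * oA" unfolding P.a_def oA_def by (rule onorm_compose[OF P.bl_pow P.blA])
    also have "\<dots> \<le> M * oA" by (rule mult_right_mono[OF M oA])
    finally show ?thesis .
  qed
  define D where "D = max 1 (M * oA / \<rho>^n0)"
  have Dq: "P.a j \<le> D * \<rho>^j" for j
  proof (cases "n0 \<le> j")
    case True
    then have "P.a j \<le> \<rho>^j" using dec by blast
    also have "\<dots> \<le> D * \<rho>^j" 
      using rho by (simp add: D_def mult_le_cancel_right1)
    finally show ?thesis by simp
  next
    case False
    have MoA: "0 \<le> M * oA" using aM[of j] P.a_nonneg[of j] by linarith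
    have "P.a j \<le> M * oA" by (rule aM)
    also have "\<dots> = (M * oA / \<rho>^n0) * \<rho>^n0" using rho by simp
    also have "\<dots> \<le> (M * oA / \<rho>^n0) * \<rho>^j"
      using False rho MoA by (intro mult_left_mono power_decreasing) auto
    also have "\<dots> \<le> D * \<rho>^j" using rho by (intro mult_right_mono) (auto simp: D_def)
    finally show ?thesis .
  qed
  interpret Q: pbop2 T D \<rho> by unfold_locales (use rho Dq in auto)
  have linT: "linear T" by (rule Q.linT)
  have linR: "linear Q.R" by (rule bounded_linear.linear[OF Q.bl_R])
  define X0 where "X0 = {x. T x = x}"
  have "closed X0" unfolding X0_def
    by (intro closed_Collect_eq linear_continuous_on[OF P.blT] continuous_on_id)
  moreover have "csubspace X0" unfolding X0_def csubspace_def
    by (simp add: linear_0[OF linT] linear_add[OF linT] P.cT)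
  moreover have "T ` X0 \<subseteq> X0" unfolding X0_def by auto
  moreover have "closed Q.X1" unfolding Q.X1_def
    by (intro closed_Collect_eq linear_continuous_on[OF Q.bl_R] continuous_on_id)
  moreover have "csubspace Q.X1" unfolding Q.X1_def csubspace_def
    by (simp add: linear_0[OF linR] Q.R_add Q.R_scaleC)
  moreover have "T ` Q.X1 \<subseteq> Q.X1" using Q.X1_T by auto
  moreover have "X0 \<subseteq> Fix T" unfolding X0_def Fix_def by auto
  moreover have "spectral_radius_on Q.X1 T < 1" by (rule Q.radius_X1)
  moreover have "X0 \<inter> Q.X1 = {0}"
    using Q.R_fix by (auto simp: X0_def Q.X1_def linear_0[OF linT] linear_0[OF linR])
  moreover have "\<forall>x. \<exists>x0\<in>X0. \<exists>x1\<in>Q.X1. x = x0 + x1"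
  proof
    fix x
    have f: "T (x - Q.R x) = x - Q.R x"
      by (simp add: linear_diff[OF linT] Q.TR)
    have "Q.R (Q.R x) = Q.R x"
    proof -
      have "Q.R (x - Q.R x) = 0" by (rule Q.R_fix[OF f])
      then show ?thesis by (simp add: linear_diff[OF linR])
    qed
    then show "\<exists>x0\<in>X0. \<exists>x1\<in>Q.X1. x = x0 + x1" using f
      by (intro bexI[of _ "x - Q.R x"] bexI[of _ "Q.R x"]) (auto simp: X0_def Q.X1_def)
  qed
  ultimately show ?thesis by blast
qed

end
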